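(* Let $\beta_1,\beta_2,\dots\in(0,\alpha]$, $\phi\in C^1([0,1])$, and let $\psi_j$ be as in the context. Assume $\sup_j\|\psi_j\circ\mathcal T^j\|_4<\infty$ and that $\sigma_n^2:=\int\big(\sum_{k=1}^n\phi_k\circ\mathcal T^k\big)^2dm$ satisfies $\sigma_n^2=\int\sum_{j=1}^n\psi_j^2\circ\mathcal T^j\,dm+O(1)$ and $\sigma_n^2\ge c\,n^\beta$ for some $c>0$, $\beta>\frac12$ and all large $n$. Then $$\frac{1}{\sigma_n^2}\sum_{j=1}^n\Big(\psi_j^2\circ\mathcal T^j-\mathbb E\big[\psi_j^2\circ\mathcal T^j\,\big|\,\mathcal B_{j+1}\big]\Big)\to0\quad\text{in probability with respect to }m.$$
   Context: For $0<\gamma<1$ let $T_\gamma(x)=x+2^\gamma x^{1+\gamma}$ on $[0,1/2]$ and $T_\gamma(x)=2x-1$ on $(1/2,1]$; $0<\alpha<1$ fixed. $m$ is Lebesgue measure on $[0,1]$, $\|\cdot\|_p$ the $L^p(m)$ norm, and conditional expectations are with respect to $m$. $\mathcal B$ is the Borel $\sigma$-algebra of $[0,1]$. $P_\gamma$ is the transfer operator of $T_\gamma$ w.r.t. $m$: $\int(P_\gamma f)g\,dm=\int f\,(g\circ T_\gamma)\,dm$. Write $T_k=T_{\beta_k}$, $P_k=P_{\beta_k}$, $\mathcal T^n=T_n\circ\cdots\circ T_1$, $\mathcal P^n=P_n\circ\cdots\circ P_1$, $\mathcal P^0=\mathrm{id}$, $\mathcal P_k^{j}=P_{k+j-1}\circ\cdots\circ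 P_k$, and $\mathcal B_n=(\mathcal T^n)^{-1}\mathcal B$. $\mathbf1$ is the constant function. Put $\phi_k=\phi-\int\phi\circ\mathcal T^k\,dm$ ($k\ge1$), $\phi_0=0$, $H_n=\frac{1}{\mathcal P^n\mathbf 1}\sum_{\ell=0}^{n-1}\mathcal P_{\ell+1}^{\,n-\ell}(\phi_\ell\,\mathcal P^\ell\mathbf 1)$, and $\psi_n=\phi_n+H_n-H_{n+1}\circ T_{n+1}$. *)

theory Defs
  imports "HOL-Probability.Probability"
begin

definition mI :: "real measure" where
  "mI = restrict_space lborel {0..1}"

definition LSV :: "real \<Rightarrow> real \<Rightarrow> real" where
  "LSV \<gamma> x = (if x \<le> 1/2 then x + 2 powr \<gamma> * x powr (1 + \<gamma>) else 2 * x - 1)"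

definition transfer :: "real \<Rightarrow> (real \<Rightarrow> real) \<Rightarrow> (real \<Rightarrow> real)" where
  "transfer \<gamma> f = (SOME h. h \<in> borel_measurable mI \<and> integrable mI h \<and>
      (\<forall>g \<in> borel_measurable mI. bounded (g ` space mI) \<longrightarrow>
         (\<integral>x. h x * g x \<partial>mI) = (\<integral>x. f x * g (LSV \<gamma> x) \<partial>mI)))"

fun calT :: "(nat \<Rightarrow> real) \<Rightarrow> nat \<Rightarrow> real \<Rightarrow> real" where
  "calT \<beta> 0 = id"
| "calT \<beta> (Suc n) = LSV (\<beta> (Suc n)) \<circ> calT \<beta> n"

fun calP :: "(nat \<Rightarrow> real) \<Rightarrow> nat \<Rightarrow> (real \<Rightarrow> real) \<Rightarrow> real \<Rightarrow> real" where
  "calP \<beta> 0 f = f"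
| "calP \<beta> (Suc n) f = transfer (\<beta> (Suc n)) (calP \<beta> n f)"

text \<open>P_k^j = P_(k+j-1) o ... o P_k.\<close>
fun calPk :: "(nat \<Rightarrow> real) \<Rightarrow> nat \<Rightarrow> nat \<Rightarrow> (real \<Rightarrow> real) \<Rightarrow> real \<Rightarrow> real" where
  "calPk \<beta> k 0 f = f"
| "calPk \<beta> k (Suc j) f = transfer (\<beta> (k + j)) (calPk \<beta> k j f)"

definition phik :: "(nat \<Rightarrow> real) \<Rightarrow> (real \<Rightarrow> real) \<Rightarrow> nat \<Rightarrow> real \<Rightarrow> real" where
  "phik \<beta> \<phi> k x = (if k = 0 then 0 else \<phi> x - (\<integral>y. \<phi> (calT \<beta> k y) \<partial>mI))"

definition Hn :: "(nat \<Rightarrow> real) \<Rightarrow> (real \<Rightarrow> real) \<Rightarrow> nat \<Rightarrow> real \<Rightarrow> real" where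
  "Hn \<beta> \<phi> n x = (1 / calP \<beta> n (\<lambda>_. 1) x) *
     (\<Sum>l<n. calPk \<beta> (l + 1) (n - l) (\<lambda>y. phik \<beta> \<phi> l y * calP \<beta> l (\<lambda>_. 1) y) x)"

definition psi :: "(nat \<Rightarrow> real) \<Rightarrow> (real \<Rightarrow> real) \<Rightarrow> nat \<Rightarrow> real \<Rightarrow> real" where
  "psi \<beta> \<phi> n x = phik \<beta> \<phi> n x + Hn \<beta> \<phi> n x - Hn \<beta> \<phi> (n + 1) (LSV (\<beta> (n + 1)) x)"

definition Bn :: "(nat \<Rightarrow> real) \<Rightarrow> nat \<Rightarrow> real measure" where
  "Bn \<beta> n = vimage_algebra (space mI) (calT \<beta> n) mI"

definition C1_on_unit :: "(real \<Rightarrow> real) \<Rightarrow> bool" where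
  "C1_on_unit \<phi> \<longleftrightarrow> (\<exists>D. continuous_on {0..1} D \<and>
      (\<forall>x\<in>{0..1}. (\<phi> has_real_derivative D x) (at x within {0..1})))"

definition conv_in_prob :: "real measure \<Rightarrow> (nat \<Rightarrow> real \<Rightarrow> real) \<Rightarrow> bool" where
  "conv_in_prob M X \<longleftrightarrow>
     (\<forall>\<epsilon>>0. (\<lambda>n. measure M {x \<in> space M. \<bar>X n x\<bar> > \<epsilon>}) \<longlonglongrightarrow> 0)"

end

theory Submission
  imports Defs
begin


lemma space_mI[simp]: "space mI = {0..1}"
  by (simp add: mI_def)

lemma sets_mI: "sets mI = (\<inter>) {0..1} ` sets borel"
  by (simp add: mI_def sets_restrict_space)

lemma emeasure_mI: "A \<in> sets mI \<Longrightarrow> emeasure mI A = emeasure lborel A"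
  unfolding mI_def by (subst emeasure_restrict_space) (auto simp: sets_restrict_space)

lemma finite_measure_mI: "finite_measure mI"
  by (rule finite_measureI) (use emeasure_mI[OF sets.top[of mI]] in simp)

interpretation mIf: finite_measure mI by (rule finite_measure_mI)

lemma LSV_borel[measurable]: "LSV g \<in> borel_measurable borel"
  unfolding LSV_def by measurable

lemma LSV_range: assumes "0 \<le> g" "x \<in> {0..1::real}" shows "LSV g x \<in> {0..1}"
proof (cases "x \<le> 1/2")
  case True
  have "x powr (1+g) \<le> (1/2) powr (1+g)" using True assms by (intro powr_mono2) auto
  moreover have "(2::real) powr g * (1/2) powr (1+g) = 1/2"
    by (simp add: powr_add powr_divide)
  ultimately have "2 powr g * x powr (1+g) \<le> 1/2"
    by (metis mult_left_mono powr_ge_zero)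
  then show ?thesis using True assms by (auto simp: LSV_def)
next
  case False then show ?thesis using assms by (auto simp: LSV_def)
qed

lemma LSV_meas: assumes "0 \<le> g" shows "LSV g \<in> measurable mI mI"
  unfolding mI_def
  by (intro measurable_restrict_space3) (use LSV_range[OF assms] in auto)



lemma negl_branch:
  fixes T :: "real \<Rightarrow> real" and S :: "real set"
  assumes "negligible A"
    and "\<And>x. x \<in> S \<Longrightarrow> \<exists>D. D \<noteq> 0 \<and> (T has_real_derivative D) (at x)"
  shows "negligible {x \<in> S. T x \<in> A}"
proof -
  obtain D where D: "\<And>x. x \<in> S \<Longrightarrow> D x \<noteq> 0 \<and> (T has_real_derivative D x) (at x)"
    using assms(2) by metis
  show ?thesis
  proof (rule negligible_differentiable_vimage[OF assms(1), where f' = "\<lambda>x. (*) (D x)"])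
    fix x assume "x \<in> S"
    then show "inj ((*) (D x))" using D by (auto simp: inj_def)
    show "(T has_derivative (*) (D x)) (at x within S)"
      using D[OF \<open>x \<in> S\<close>] has_field_derivative_imp_has_derivative has_derivative_at_withinI by blast
  qed
qed

lemma sets_mI_borel: "P \<in> sets mI \<Longrightarrow> P \<in> sets borel"
proof -
  assume "P \<in> sets mI"
  then obtain B where "B \<in> sets borel" "P = {0..1} \<inter> B" unfolding sets_mI by blast
  then show ?thesis by simp
qed

lemma LSV_nonsing:
  assumes g: "0 \<le> g" and A: "A \<in> sets mI" "emeasure mI A = 0"
  shows "emeasure mI (LSV g -` A \<inter> space mI) = 0"
proof -
  have Ab: "A \<in> sets borel" using A(1) by (rule sets_mI_borel)
  have "A \<in> null_sets lborel" using A Ab emeasure_mI by (simp add: null_sets_def)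
  then have negA: "negligible A"
    by (simp add: negligible_iff_null_sets null_sets_completionI)
  define T1 where "T1 x = x + 2 powr g * x powr (1+g)" for x :: real
  have n1: "negligible {x \<in> {0<..1/2}. T1 x \<in> A}"
  proof (rule negl_branch[OF negA])
    fix x :: real assume x: "x \<in> {0<..1/2}"
    have "(T1 has_real_derivative (1 + 2 powr g * ((1+g) * x powr (1+g-1)))) (at x)"
      unfolding T1_def
    proof (rule DERIV_add[OF DERIV_ident DERIV_cmult])
      show "((\<lambda>z. z powr (1+g)) has_real_derivative (1+g) * x powr (1+g-1)) (at x)"
        by (rule has_real_derivative_powr) (use x in auto)
    qed
    moreover have "1 + 2 powr g * ((1+g) * x powr (1+g-1)) \<noteq> 0"
    proof -
      have "0 \<le> 2 powr g * ((1+g) * x powr (1+g-1))" using g by simp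
      then show ?thesis by linarith
    qed
    ultimately show "\<exists>D. D \<noteq> 0 \<and> (T1 has_real_derivative D) (at x)" by blast
  qed
  have n2: "negligible {x \<in> {1/2<..1}. (\<lambda>x. 2*x-1) x \<in> A}"
  proof (rule negl_branch[OF negA])
    fix x :: real
    have "((\<lambda>x. 2*x-1) has_real_derivative 2 * 1 - 0) (at x)"
      by (rule DERIV_diff[OF DERIV_cmult[OF DERIV_ident] DERIV_const])
    then show "\<exists>D. D \<noteq> 0 \<and> ((\<lambda>x. 2*x-1) has_real_derivative D) (at x)"
      by (intro exI[where x=2]) simp
  qed
  have sub: "LSV g -` A \<inter> space mI \<subseteq> insert 0 ({x \<in> {0<..1/2}. T1 x \<in> A} \<union> {x \<in> {1/2<..1}. (\<lambda>x. 2*x-1) x \<in> A})"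
  proof
    fix x assume x: "x \<in> LSV g -` A \<inter> space mI"
    show "x \<in> insert 0 ({x \<in> {0<..1/2}. T1 x \<in> A} \<union> {x \<in> {1/2<..1}. (\<lambda>x. 2*x-1) x \<in> A})"
    proof (cases "x \<le> 1/2")
      case True
      show ?thesis
      proof (cases "x = 0")
        case False
        have "T1 x = LSV g x" using True by (simp add: LSV_def T1_def)
        then have "x \<in> {x \<in> {0<..1/2}. T1 x \<in> A}" using x True False by auto
        then show ?thesis by blast
      qed simp
    next
      case False
      then show ?thesis using x by (auto simp: LSV_def)
    qed
  qed
  have "negligible (LSV g -` A \<inter> space mI)"
    by (rule negligible_subset[OF _ sub]) (use negligible_Un[OF n1 n2] in simp)
  then have "LSV g -` A \<inter> space mI \<in> null_sets lebesgue" by (simp add: negligible_iff_null_sets)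
  moreover have Pm: "LSV g -` A \<inter> space mI \<in> sets mI"
    using measurable_sets[OF LSV_meas[OF g] A(1)] .
  moreover have "LSV g -` A \<inter> space mI \<in> sets lborel" using sets_mI_borel[OF Pm] by simp
  ultimately have "LSV g -` A \<inter> space mI \<in> null_sets lborel"
    using null_sets_completion_iff by blast
  then show ?thesis using emeasure_mI[OF Pm] null_setsD1 by metis
qed



lemma transfer_pos:
  fixes u :: "real \<Rightarrow> real"
  assumes g: "0 \<le> g" and u: "integrable mI u" and u0: "\<And>x. 0 \<le> u x"
  shows "\<exists>h. h \<in> borel_measurable mI \<and> integrable mI h \<and>
    (\<forall>G\<in>borel_measurable mI. bounded (G ` space mI) \<longrightarrow>
       integrable mI (\<lambda>x. h x * G x) \<and> integrable mI (\<lambda>x. u x * G (LSV g x)) \<and>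
       (\<integral>x. h x * G x \<partial>mI) = (\<integral>x. u x * G (LSV g x) \<partial>mI))"
proof -
  have um[measurable]: "u \<in> borel_measurable mI" using u by auto
  have Tm[measurable]: "LSV g \<in> measurable mI mI" by (rule LSV_meas[OF g])
  define D where "D = density mI (\<lambda>x. ennreal (u x))"
  define N where "N = distr D mI (LSV g)"
  have setsD: "sets D = sets mI" by (simp add: D_def)
  have TmD[measurable]: "LSV g \<in> measurable D mI"
    using Tm by (simp add: measurable_cong_sets[OF setsD refl])
  have setsN: "sets N = sets mI" by (simp add: N_def)
  have spN: "space N = space mI" by (simp add: N_def)
  have finN: "finite_measure N"
  proof (rule finite_measureI)
    have "emeasure N (space N) = emeasure D (LSV g -` space mI \<inter> space D)"
      unfolding N_def using emeasure_distr[OF TmD sets.top[of mI]] by (simp add: spN)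
    also have "\<dots> = emeasure D (space mI)"
    proof -
      have "LSV g -` space mI \<inter> space D = space mI" using LSV_range[OF g] by (auto simp: D_def)
      then show ?thesis by simp
    qed
    also have "\<dots> = (\<integral>\<^sup>+x. ennreal (u x) * indicator (space mI) x \<partial>mI)"
      unfolding D_def by (rule emeasure_density) measurable
    also have "\<dots> = (\<integral>\<^sup>+x. ennreal (u x) \<partial>mI)"
      by (rule nn_integral_cong) simp
    also have "\<dots> < \<infinity>" using u by (simp add: integrable_iff_bounded u0)
    finally show "emeasure N (space N) \<noteq> \<infinity>" by simp
  qed
  have ac: "absolutely_continuous mI N"
    unfolding absolutely_continuous_def
  proof
    fix A assume A: "A \<in> null_sets mI"
    then have As: "A \<in> sets mI" and A0: "emeasure mI A = 0" by (auto simp: null_sets_def)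
    have M0: "emeasure mI (LSV g -` A \<inter> space mI) = 0" by (rule LSV_nonsing[OF g As A0])
    have P: "LSV g -` A \<inter> space mI \<in> sets mI" using measurable_sets[OF Tm As] .
    have acD: "absolutely_continuous mI D" unfolding D_def by (rule absolutely_continuousI_density) measurable
    have "emeasure D (LSV g -` A \<inter> space mI) = 0"
      by (rule absolutely_continuousD[OF acD P M0])
    then have "emeasure N A = 0"
      unfolding N_def using emeasure_distr[OF TmD As] by (simp add: D_def)
    then show "A \<in> null_sets N" using As setsN by (intro null_setsI) auto
  qed
  interpret N: finite_measure N by (rule finN)
  have sfN: "sigma_finite_measure N" by (rule N.sigma_finite_measure_axioms)
  define h where "h x = enn2real (RN_deriv mI N x)" for x
  have hm[measurable]: "h \<in> borel_measurable mI" unfolding h_def by measurable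
  have key: "integrable mI (\<lambda>x. h x * G x) \<and> integrable mI (\<lambda>x. u x * G (LSV g x)) \<and>
       (\<integral>x. h x * G x \<partial>mI) = (\<integral>x. u x * G (LSV g x) \<partial>mI)"
    if Gm[measurable]: "G \<in> borel_measurable mI" and Gb: "bounded (G ` space mI)" for G
  proof -
    obtain B0 where B0: "\<forall>y\<in>G ` space mI. norm y \<le> B0" using Gb bounded_iff by blast
    define B where "B = B0"
    have B: "\<And>x. x \<in> space mI \<Longrightarrow> norm (G x) \<le> B" using B0 unfolding B_def by blast
    have GmN: "G \<in> borel_measurable N" using Gm by (simp add: measurable_cong_sets[OF setsN refl])
    have iN: "integrable N G"
      by (rule N.integrable_const_bound[where B=B]) (use B spN GmN in auto)
    have 1: "integrable mI (\<lambda>x. h x * G x)" "integral\<^sup>L N G = (\<integral>x. h x * G x \<partial>mI)"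
      using mIf.RN_deriv_integrable[OF sfN ac setsN Gm] mIf.RN_deriv_integral[OF sfN ac setsN Gm] iN
      unfolding h_def by auto
    have "integral\<^sup>L N G = integral\<^sup>L D (\<lambda>x. G (LSV g x))"
      unfolding N_def by (rule integral_distr[OF TmD Gm])
    also have "\<dots> = (\<integral>x. u x * G (LSV g x) \<partial>mI)"
      unfolding D_def by (subst integral_density) (auto simp: u0)
    finally have 2: "integral\<^sup>L N G = (\<integral>x. u x * G (LSV g x) \<partial>mI)" .
    have 3: "integrable mI (\<lambda>x. u x * G (LSV g x))"
    proof (rule Bochner_Integration.integrable_bound[where f="\<lambda>x. B * u x"])
      show "integrable mI (\<lambda>x. B * u x)" using u by simp
      show "(\<lambda>x. u x * G (LSV g x)) \<in> borel_measurable mI" by measurable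
      show "AE x in mI. norm (u x * G (LSV g x)) \<le> norm (B * u x)"
      proof (rule AE_I2)
        fix x assume x: "x \<in> space mI"
        have "LSV g x \<in> space mI" using LSV_range[OF g] x by auto
        then have "\<bar>G (LSV g x)\<bar> \<le> B" using B by auto
        then have "\<bar>u x * G (LSV g x)\<bar> \<le> u x * B" using u0[of x] by (simp add: abs_mult mult_left_mono)
        then show "norm (u x * G (LSV g x)) \<le> norm (B * u x)" by (simp add: mult.commute)
      qed
    qed
    show ?thesis using 1 2 3 by simp
  qed
  have "bounded ((\<lambda>x::real. 1::real) ` space mI)" by (rule finite_imp_bounded, rule finite_subset[of _ "{1}"]) auto
  then have "integrable mI h" using key[of "\<lambda>_. 1"] by simp
  then show ?thesis using hm key by blast
qed

lemma transfer_exists: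
  fixes f :: "real \<Rightarrow> real"
  assumes g: "0 \<le> g" and f: "integrable mI f"
  shows "\<exists>h. h \<in> borel_measurable mI \<and> integrable mI h \<and>
      (\<forall>G \<in> borel_measurable mI. bounded (G ` space mI) \<longrightarrow>
         (\<integral>x. h x * G x \<partial>mI) = (\<integral>x. f x * G (LSV g x) \<partial>mI))"
proof -
  have ip: "integrable mI (\<lambda>x. max (f x) 0)" by (rule integrable_max[OF f integrable_zero])
  have im: "integrable mI (\<lambda>x. max (- f x) 0)" by (rule integrable_max[OF integrable_minus[OF f] integrable_zero])
  obtain h1 where h1: "h1 \<in> borel_measurable mI" "integrable mI h1"
    "\<forall>G\<in>borel_measurable mI. bounded (G ` space mI) \<longrightarrow>
       integrable mI (\<lambda>x. h1 x * G x) \<and> integrable mI (\<lambda>x. max (f x) 0 * G (LSV g x)) \<and>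
       (\<integral>x. h1 x * G x \<partial>mI) = (\<integral>x. max (f x) 0 * G (LSV g x) \<partial>mI)"
    using transfer_pos[OF g ip max.cobounded2] by blast
  obtain h2 where h2: "h2 \<in> borel_measurable mI" "integrable mI h2"
    "\<forall>G\<in>borel_measurable mI. bounded (G ` space mI) \<longrightarrow>
       integrable mI (\<lambda>x. h2 x * G x) \<and> integrable mI (\<lambda>x. max (- f x) 0 * G (LSV g x)) \<and>
       (\<integral>x. h2 x * G x \<partial>mI) = (\<integral>x. max (- f x) 0 * G (LSV g x) \<partial>mI)"
    using transfer_pos[OF g im max.cobounded2] by blast
  show ?thesis
  proof (intro exI[where x="\<lambda>x. h1 x - h2 x"] conjI ballI impI)
    show "(\<lambda>x. h1 x - h2 x) \<in> borel_measurable mI" using h1 h2 by measurable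
    show "integrable mI (\<lambda>x. h1 x - h2 x)" by (rule Bochner_Integration.integrable_diff[OF h1(2) h2(2)])
    fix G :: "real \<Rightarrow> real" assume G: "G \<in> borel_measurable mI" "bounded (G ` space mI)"
    note H1 = h1(3)[rule_format, OF G(1) G(2)]
    note H2 = h2(3)[rule_format, OF G(1) G(2)]
    have "(\<integral>x. (h1 x - h2 x) * G x \<partial>mI) = (\<integral>x. h1 x * G x - h2 x * G x \<partial>mI)"
      by (simp add: left_diff_distrib)
    also have "\<dots> = (\<integral>x. h1 x * G x \<partial>mI) - (\<integral>x. h2 x * G x \<partial>mI)"
      using H1 H2 by (intro Bochner_Integration.integral_diff) simp_all
    also have "\<dots> = (\<integral>x. max (f x) 0 * G (LSV g x) \<partial>mI) - (\<integral>x. max (- f x) 0 * G (LSV g x) \<partial>mI)"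
      using H1 H2 by simp
    also have "\<dots> = (\<integral>x. max (f x) 0 * G (LSV g x) - max (- f x) 0 * G (LSV g x) \<partial>mI)"
      using H1 H2 by (intro Bochner_Integration.integral_diff[symmetric]) simp_all
    also have "\<dots> = (\<integral>x. f x * G (LSV g x) \<partial>mI)"
      by (intro Bochner_Integration.integral_cong refl) (simp add: max_def algebra_simps)
    finally show "(\<integral>x. (h1 x - h2 x) * G x \<partial>mI) = (\<integral>x. f x * G (LSV g x) \<partial>mI)" .
  qed
qed

lemma transfer_prop:
  fixes f :: "real \<Rightarrow> real"
  assumes g: "0 \<le> g" and f: "integrable mI f"
  shows "transfer g f \<in> borel_measurable mI" "integrable mI (transfer g f)"
proof -
  have "transfer g f \<in> borel_measurable mI \<and> integrable mI (transfer g f)"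
    unfolding transfer_def by (rule someI2_ex[OF transfer_exists[OF g f]]) auto
  then show "transfer g f \<in> borel_measurable mI" "integrable mI (transfer g f)" by auto
qed



lemma cont_meas: assumes "continuous_on {0..1} (f::real\<Rightarrow>real)" shows "f \<in> borel_measurable mI"
proof -
  have e: "sets mI = sets (restrict_space borel {0..1::real})" by (simp add: mI_def sets_restrict_space)
  show ?thesis using borel_measurable_continuous_on_restrict[OF assms]
    unfolding measurable_cong_sets[OF e refl] .
qed

lemma bnd_mult_int:
  fixes f g :: "real \<Rightarrow> real"
  assumes f: "integrable mI f" and g: "g \<in> borel_measurable mI" and B: "\<And>x. x \<in> space mI \<Longrightarrow> \<bar>g x\<bar> \<le> B"
  shows "integrable mI (\<lambda>x. g x * f x)"
proof (rule Bochner_Integration.integrable_bound[where f="\<lambda>x. B * f x"])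
  show "integrable mI (\<lambda>x. B * f x)" using f by simp
  show "(\<lambda>x. g x * f x) \<in> borel_measurable mI" using borel_measurable_integrable[OF f] g by (rule borel_measurable_times[rotated])
  show "AE x in mI. norm (g x * f x) \<le> norm (B * f x)"
  proof (rule AE_I2)
    fix x assume x: "x \<in> space mI"
    have "\<bar>g x\<bar> * \<bar>f x\<bar> \<le> B * \<bar>f x\<bar>" using B[OF x] by (simp add: mult_right_mono)
    moreover have "0 \<le> B" using B[OF x] by linarith
    ultimately show "norm (g x * f x) \<le> norm (B * f x)" by (simp add: abs_mult)
  qed
qed

lemma calT_meas: assumes "\<And>k. k \<ge> 1 \<Longrightarrow> 0 \<le> \<beta> k" shows "calT \<beta> n \<in> measurable mI mI"
proof (induction n)
  case 0 then show ?case by simp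
next
  case (Suc n)
  have "LSV (\<beta> (Suc n)) \<in> measurable mI mI" by (rule LSV_meas) (use assms in auto)
  then show ?case using Suc by (simp add: measurable_comp)
qed

lemma calT_range: assumes "\<And>k. k \<ge> 1 \<Longrightarrow> 0 \<le> \<beta> k" "x \<in> space mI" shows "calT \<beta> n x \<in> space mI"
  using measurable_space[OF calT_meas[OF assms(1)] assms(2)] .

lemma calP_ok:
  assumes b: "\<And>k. k \<ge> 1 \<Longrightarrow> 0 \<le> \<beta> k" and f: "integrable mI f"
  shows "integrable mI (calP \<beta> n f)"
proof (induction n)
  case 0 then show ?case using f by simp
next
  case (Suc n) then show ?case using transfer_prop[of "\<beta> (Suc n)"] b by simp
qed

lemma calPk_ok:
  assumes b: "\<And>k. k \<ge> 1 \<Longrightarrow> 0 \<le> \<beta> k" and f: "integrable mI f" and k: "k \<ge> 1"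
  shows "integrable mI (calPk \<beta> k j f)"
proof (induction j)
  case 0 then show ?case using f by simp
next
  case (Suc j) then show ?case using transfer_prop[of "\<beta> (k + j)"] b k by simp
qed

lemma psi_meas:
  assumes b: "\<And>k. k \<ge> 1 \<Longrightarrow> 0 \<le> \<beta> k" and phi: "C1_on_unit \<phi>"
  shows "psi \<beta> \<phi> n \<in> borel_measurable mI"
proof -
  have cont: "continuous_on {0..1} \<phi>"
    using phi unfolding C1_on_unit_def continuous_on_eq_continuous_within
    by (metis DERIV_continuous)
  have phim: "\<phi> \<in> borel_measurable mI" by (rule cont_meas[OF cont])
  obtain B0 where B0: "\<forall>y\<in>\<phi> ` {0..1}. norm y \<le> B0"
    using compact_imp_bounded[OF compact_continuous_image[OF cont]] bounded_iff by blast
  have pkm: "phik \<beta> \<phi> l \<in> borel_measurable mI" for l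
    unfolding phik_def using phim by measurable
  have pkb: "\<bar>phik \<beta> \<phi> l x\<bar> \<le> B0 + \<bar>\<integral>y. \<phi> (calT \<beta> l y) \<partial>mI\<bar>" if "x \<in> space mI" for l x
  proof -
    have "\<bar>\<phi> x\<bar> \<le> B0" using B0 that by auto
    then show ?thesis by (auto simp: phik_def)
  qed
  have one: "integrable mI (\<lambda>_. 1::real)" by simp
  have Hm: "Hn \<beta> \<phi> m \<in> borel_measurable mI" for m
  proof -
    have P: "calP \<beta> m (\<lambda>_. 1) \<in> borel_measurable mI"
      using calP_ok[OF b one] by auto
    have S: "(\<lambda>x. calPk \<beta> (l + 1) (m - l) (\<lambda>y. phik \<beta> \<phi> l y * calP \<beta> l (\<lambda>_. 1) y) x)
       \<in> borel_measurable mI" for l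
    proof -
      have "integrable mI (\<lambda>y. phik \<beta> \<phi> l y * calP \<beta> l (\<lambda>_. 1) y)"
        by (rule bnd_mult_int[OF calP_ok[OF b one] pkm pkb])
      then have "integrable mI (calPk \<beta> (l + 1) (m - l) (\<lambda>y. phik \<beta> \<phi> l y * calP \<beta> l (\<lambda>_. 1) y))"
        using calPk_ok[OF b, where k="l+1"] by simp
      then show ?thesis by auto
    qed
    show ?thesis unfolding Hn_def using P S by measurable
  qed
  have L: "LSV (\<beta> (n + 1)) \<in> measurable mI mI" by (rule LSV_meas) (use b in auto)
  have "(\<lambda>x. Hn \<beta> \<phi> (n + 1) (LSV (\<beta> (n + 1)) x)) \<in> borel_measurable mI"
    using measurable_compose[OF L Hm] .
  then show ?thesis unfolding psi_def[abs_def] using pkm Hm by measurable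
qed



lemma prod_int:
  fixes f g :: "real \<Rightarrow> real"
  assumes f: "integrable mI (\<lambda>x. (f x)\<^sup>2)" "f \<in> borel_measurable mI"
    and g: "integrable mI (\<lambda>x. (g x)\<^sup>2)" "g \<in> borel_measurable mI"
  shows "integrable mI (\<lambda>x. f x * g x)"
proof (rule Bochner_Integration.integrable_bound[where f="\<lambda>x. (f x)\<^sup>2 + (g x)\<^sup>2"])
  show "integrable mI (\<lambda>x. (f x)\<^sup>2 + (g x)\<^sup>2)" using f g by simp
  show "(\<lambda>x. f x * g x) \<in> borel_measurable mI" using f(2) g(2) by (rule borel_measurable_times)
  show "AE x in mI. norm (f x * g x) \<le> norm ((f x)\<^sup>2 + (g x)\<^sup>2)"
  proof (rule AE_I2)
    fix x
    have "2 * (\<bar>f x\<bar> * \<bar>g x\<bar>) \<le> (f x)\<^sup>2 + (g x)\<^sup>2" using sum_squares_bound[of "\<bar>f x\<bar>" "\<bar>g x\<bar>"] by (simp add: mult.assoc)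
    moreover have "0 \<le> \<bar>f x\<bar> * \<bar>g x\<bar>" by simp
    ultimately have "\<bar>f x\<bar> * \<bar>g x\<bar> \<le> (f x)\<^sup>2 + (g x)\<^sup>2" by linarith
    then have "\<bar>f x * g x\<bar> \<le> (f x)\<^sup>2 + (g x)\<^sup>2" by (simp add: abs_mult)
    then show "norm (f x * g x) \<le> norm ((f x)\<^sup>2 + (g x)\<^sup>2)" by simp
  qed
qed

lemma ce_L2:
  fixes Y :: "real \<Rightarrow> real"
  assumes sf: "sigma_finite_subalgebra mI F" and Ym: "Y \<in> borel_measurable mI"
    and Y2: "integrable mI (\<lambda>x. (Y x)\<^sup>2)"
  shows "integrable mI Y"
    "integrable mI (\<lambda>x. (real_cond_exp mI F Y x)\<^sup>2)"
    "(\<integral>x. (real_cond_exp mI F Y x)\<^sup>2 \<partial>mI) \<le> (\<integral>x. (Y x)\<^sup>2 \<partial>mI)"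
    "integrable mI (\<lambda>x. (Y x - real_cond_exp mI F Y x)\<^sup>2)"
    "(\<integral>x. (Y x - real_cond_exp mI F Y x)\<^sup>2 \<partial>mI) \<le> 4 * (\<integral>x. (Y x)\<^sup>2 \<partial>mI)"
proof -
  interpret sigma_finite_subalgebra mI F by (rule sf)
  show Yi: "integrable mI Y" by (rule mIf.square_integrable_imp_integrable[OF Ym Y2])
  define E where "E = real_cond_exp mI F Y"
  have Em: "E \<in> borel_measurable mI" unfolding E_def by (rule borel_measurable_cond_exp2)
  have J: "AE x in mI. (E x)\<^sup>2 \<le> real_cond_exp mI F (\<lambda>x. (Y x)\<^sup>2) x"
    unfolding E_def
    by (rule real_cond_exp_jensens_inequality(2)[where X=Y and I=UNIV and q=power2, OF Yi])
       (auto simp: Y2 convex_power2)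
  have E2: "integrable mI (\<lambda>x. (E x)\<^sup>2)"
    unfolding E_def
    by (rule integrable_convex_cond_exp[where X=Y and I=UNIV and q=power2, OF Yi])
       (auto simp: Y2 convex_power2)
  then show E2': "integrable mI (\<lambda>x. (real_cond_exp mI F Y x)\<^sup>2)" by (simp add: E_def)
  have "(\<integral>x. (E x)\<^sup>2 \<partial>mI) \<le> (\<integral>x. real_cond_exp mI F (\<lambda>x. (Y x)\<^sup>2) x \<partial>mI)"
    by (rule integral_mono_AE[OF E2 real_cond_exp_int(1)[OF Y2] J])
  also have "\<dots> = (\<integral>x. (Y x)\<^sup>2 \<partial>mI)" by (rule real_cond_exp_int(2)[OF Y2])
  finally have IE: "(\<integral>x. (E x)\<^sup>2 \<partial>mI) \<le> (\<integral>x. (Y x)\<^sup>2 \<partial>mI)" .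
  then show "(\<integral>x. (real_cond_exp mI F Y x)\<^sup>2 \<partial>mI) \<le> (\<integral>x. (Y x)\<^sup>2 \<partial>mI)" by (simp add: E_def)
  have pw: "(Y x - E x)\<^sup>2 \<le> 2 * (Y x)\<^sup>2 + 2 * (E x)\<^sup>2" for x
  proof -
    have "0 \<le> (Y x + E x)\<^sup>2" by simp
    then show ?thesis by (simp add: power2_eq_square algebra_simps)
  qed
  have Xm: "(\<lambda>x. (Y x - E x)\<^sup>2) \<in> borel_measurable mI" using Ym Em by measurable
  have XI: "integrable mI (\<lambda>x. (Y x - E x)\<^sup>2)"
  proof (rule Bochner_Integration.integrable_bound[where f="\<lambda>x. 2 * (Y x)\<^sup>2 + 2 * (E x)\<^sup>2"])
    show "integrable mI (\<lambda>x. 2 * (Y x)\<^sup>2 + 2 * (E x)\<^sup>2)" using Y2 E2 by simp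
    show "AE x in mI. norm ((Y x - E x)\<^sup>2) \<le> norm (2 * (Y x)\<^sup>2 + 2 * (E x)\<^sup>2)"
      using pw by simp
  qed (rule Xm)
  then show "integrable mI (\<lambda>x. (Y x - real_cond_exp mI F Y x)\<^sup>2)" by (simp add: E_def)
  have "(\<integral>x. (Y x - E x)\<^sup>2 \<partial>mI) \<le> (\<integral>x. 2 * (Y x)\<^sup>2 + 2 * (E x)\<^sup>2 \<partial>mI)"
    by (rule integral_mono[OF XI]) (use Y2 E2 pw in simp_all)
  also have "\<dots> = 2 * (\<integral>x. (Y x)\<^sup>2 \<partial>mI) + 2 * (\<integral>x. (E x)\<^sup>2 \<partial>mI)"
    using Y2 E2 by simp
  also have "\<dots> \<le> 4 * (\<integral>x. (Y x)\<^sup>2 \<partial>mI)" using IE by simp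
  finally show "(\<integral>x. (Y x - real_cond_exp mI F Y x)\<^sup>2 \<partial>mI) \<le> 4 * (\<integral>x. (Y x)\<^sup>2 \<partial>mI)"
    by (simp add: E_def)
qed

lemma rev_mart_sum:
  fixes Y :: "nat \<Rightarrow> real \<Rightarrow> real" and F :: "nat \<Rightarrow> real measure" and K :: real
  assumes sf: "\<And>j. sigma_finite_subalgebra mI (F j)"
    and mono: "\<And>i j. i \<le> j \<Longrightarrow> sets (F j) \<subseteq> sets (F i)"
    and Ym: "\<And>j. j \<ge> 1 \<Longrightarrow> Y j \<in> borel_measurable (F j)"
    and Y2: "\<And>j. j \<ge> 1 \<Longrightarrow> integrable mI (\<lambda>x. (Y j x)\<^sup>2)"
    and Yb: "\<And>j. j \<ge> 1 \<Longrightarrow> (\<integral>x. (Y j x)\<^sup>2 \<partial>mI) \<le> K"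
  defines "X \<equiv> \<lambda>j x. Y j x - real_cond_exp mI (F (j+1)) (Y j) x"
  shows "integrable mI (\<lambda>x. (\<Sum>j=1..n. X j x)\<^sup>2) \<and>
         (\<integral>x. (\<Sum>j=1..n. X j x)\<^sup>2 \<partial>mI) \<le> 4 * K * real n"
proof -
  have spF: "space (F j) = space mI" for j
    using sigma_finite_subalgebra.subalg[OF sf[of j]] by (simp add: subalgebra_def)
  have lift: "f \<in> borel_measurable (F i)" if "i \<le> j" "f \<in> borel_measurable (F j)" for f i j
  proof -
    have "subalgebra (F i) (F j)" using mono[OF that(1)] spF by (simp add: subalgebra_def)
    then show ?thesis using measurable_from_subalg that(2) by blast
  qed
  have toM: "f \<in> borel_measurable mI" if "f \<in> borel_measurable (F j)" for f j
    using measurable_from_subalg[OF sigma_finite_subalgebra.subalg[OF sf[of j]] that] .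
  have XmF: "X j \<in> borel_measurable (F j)" if j: "j \<ge> 1" for j
  proof -
    have "real_cond_exp mI (F (j+1)) (Y j) \<in> borel_measurable (F j)"
      by (rule lift[of j "j+1"]) (simp_all add: borel_measurable_cond_exp)
    then show ?thesis unfolding X_def using Ym[OF j] by (rule borel_measurable_diff[rotated])
  qed
  have Xm: "X j \<in> borel_measurable mI" if "j \<ge> 1" for j using toM[OF XmF[OF that]] .
  have YmM: "Y j \<in> borel_measurable mI" if "j \<ge> 1" for j using toM[OF Ym[OF that]] .
  have X2: "integrable mI (\<lambda>x. (X j x)\<^sup>2)" "(\<integral>x. (X j x)\<^sup>2 \<partial>mI) \<le> 4 * K" if j: "j \<ge> 1" for j
  proof -
    note c = ce_L2[OF sf[of "j+1"] YmM[OF j] Y2[OF j]]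
    show "integrable mI (\<lambda>x. (X j x)\<^sup>2)" using c(4) unfolding X_def by simp
    have "(\<integral>x. (X j x)\<^sup>2 \<partial>mI) \<le> 4 * (\<integral>x. (Y j x)\<^sup>2 \<partial>mI)" using c(5) unfolding X_def by simp
    also have "\<dots> \<le> 4 * K" using Yb[OF j] by simp
    finally show "(\<integral>x. (X j x)\<^sup>2 \<partial>mI) \<le> 4 * K" .
  qed
  have XX: "integrable mI (\<lambda>x. X i x * X j x)" if "i \<ge> 1" "j \<ge> 1" for i j
    by (rule prod_int[OF X2(1)[OF that(1)] Xm[OF that(1)] X2(1)[OF that(2)] Xm[OF that(2)]])
  have orth: "(\<integral>x. X i x * X j x \<partial>mI) = 0" if ij: "1 \<le> i" "i < j" for i j
  proof -
    interpret S: sigma_finite_subalgebra mI "F (i+1)" by (rule sf)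
    have j1: "j \<ge> 1" using ij by simp
    have fF: "X j \<in> borel_measurable (F (i+1))" by (rule lift[OF _ XmF[OF j1]]) (use ij in simp)
    have int: "integrable mI (\<lambda>x. X j x * Y i x)"
      by (rule prod_int[OF X2(1)[OF j1] Xm[OF j1] Y2[OF ij(1)] YmM[OF ij(1)]])
    note R = S.real_cond_exp_intg[OF int fF YmM[OF ij(1)]]
    have "(\<integral>x. X i x * X j x \<partial>mI) = (\<integral>x. X j x * Y i x - X j x * real_cond_exp mI (F (i+1)) (Y i) x \<partial>mI)"
      unfolding X_def by (simp add: algebra_simps)
    also have "\<dots> = (\<integral>x. X j x * Y i x \<partial>mI) - (\<integral>x. X j x * real_cond_exp mI (F (i+1)) (Y i) x \<partial>mI)"
      by (rule Bochner_Integration.integral_diff[OF int R(1)])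
    also have "\<dots> = 0" using R(2) by simp
    finally show ?thesis .
  qed
  have sq: "(\<Sum>j=1..n. X j x)\<^sup>2 = (\<Sum>i=1..n. \<Sum>j=1..n. X i x * X j x)" for x
    by (simp add: power2_eq_square sum_product)
  have intS: "integrable mI (\<lambda>x. (\<Sum>j=1..n. X j x)\<^sup>2)"
    unfolding sq using XX by (intro Bochner_Integration.integrable_sum) auto
  have "(\<integral>x. (\<Sum>j=1..n. X j x)\<^sup>2 \<partial>mI) = (\<Sum>i=1..n. \<Sum>j=1..n. \<integral>x. X i x * X j x \<partial>mI)"
    unfolding sq using XX by (subst Bochner_Integration.integral_sum, force, intro sum.cong refl,
        subst Bochner_Integration.integral_sum) auto
  also have "\<dots> = (\<Sum>i=1..n. \<integral>x. X i x * X i x \<partial>mI)"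
  proof (intro sum.cong refl)
    fix i assume i: "i \<in> {1..n}"
    have "(\<Sum>j=1..n. \<integral>x. X i x * X j x \<partial>mI) = (\<Sum>j\<in>{i}. \<integral>x. X i x * X j x \<partial>mI)"
    proof (rule sum.mono_neutral_right)
      show "\<forall>j\<in>{1..n} - {i}. (\<integral>x. X i x * X j x \<partial>mI) = 0"
      proof
        fix j assume j: "j \<in> {1..n} - {i}"
        show "(\<integral>x. X i x * X j x \<partial>mI) = 0"
        proof (cases "i < j")
          case True then show ?thesis using orth i by simp
        next
          case False
          then have "j < i" using j by auto
          then have "(\<integral>x. X j x * X i x \<partial>mI) = 0" using orth j by simp
          then show ?thesis by (simp add: mult.commute)
        qed
      qed
    qed (use i in auto)
    then show "(\<Sum>j=1..n. \<integral>x. X i x * X j x \<partial>mI) = (\<integral>x. X i x * X i x \<partial>mI)" by simp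
  qed
  also have "\<dots> \<le> (\<Sum>i=1..n. 4 * K)"
  proof (rule sum_mono)
    fix i assume i: "i \<in> {1..n}"
    then show "(\<integral>x. X i x * X i x \<partial>mI) \<le> 4 * K" using X2(2)[of i] by (simp add: power2_eq_square)
  qed
  also have "\<dots> = 4 * K * real n" by simp
  finally show ?thesis using intS by simp
qed



lemma calT_Pi: assumes b: "\<And>k. k \<ge> 1 \<Longrightarrow> 0 \<le> \<beta> k" shows "calT \<beta> n \<in> space mI \<rightarrow> space mI"
  using calT_range[where \<beta>=\<beta>, OF b] by blast

lemma Bn_sub: assumes b: "\<And>k. k \<ge> 1 \<Longrightarrow> 0 \<le> \<beta> k" shows "subalgebra mI (Bn \<beta> n)"
proof -
  have "sets (Bn \<beta> n) = {calT \<beta> n -` A \<inter> space mI | A. A \<in> sets mI}"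
    unfolding Bn_def by (rule sets_vimage_algebra2[OF calT_Pi[where \<beta>=\<beta>, OF b]])
  also have "\<dots> \<subseteq> sets mI" using measurable_sets[OF calT_meas[where \<beta>=\<beta>, OF b]] by blast
  finally have "sets (Bn \<beta> n) \<subseteq> sets mI" .
  moreover have "space (Bn \<beta> n) = space mI" unfolding Bn_def by (rule space_vimage_algebra)
  ultimately show ?thesis unfolding subalgebra_def by blast
qed

lemma Bn_sf: assumes b: "\<And>k. k \<ge> 1 \<Longrightarrow> 0 \<le> \<beta> k" shows "sigma_finite_subalgebra mI (Bn \<beta> n)"
proof -
  have "finite_measure_subalgebra mI (Bn \<beta> n)"
    unfolding finite_measure_subalgebra_def finite_measure_subalgebra_axioms_def
    by (intro conjI finite_measure_mI Bn_sub[where \<beta>=\<beta>, OF b])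
  then show ?thesis by (rule finite_measure_subalgebra_is_sigma_finite)
qed

lemma Bn_step: assumes b: "\<And>k. k \<ge> 1 \<Longrightarrow> 0 \<le> \<beta> k" shows "sets (Bn \<beta> (Suc k)) \<subseteq> sets (Bn \<beta> k)"
proof
  fix S assume S: "S \<in> sets (Bn \<beta> (Suc k))"
  have eq: "sets (Bn \<beta> (Suc k)) = {calT \<beta> (Suc k) -` A \<inter> space mI | A. A \<in> sets mI}"
    unfolding Bn_def by (rule sets_vimage_algebra2[OF calT_Pi[where \<beta>=\<beta>, OF b]])
  have "S \<in> {calT \<beta> (Suc k) -` A \<inter> space mI | A. A \<in> sets mI}"
    using S unfolding eq .
  then obtain A where A: "A \<in> sets mI" "S = calT \<beta> (Suc k) -` A \<inter> space mI"
    by (auto simp del: space_mI)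
  define B where "B = LSV (\<beta> (Suc k)) -` A \<inter> space mI"
  have L: "LSV (\<beta> (Suc k)) \<in> measurable mI mI" by (rule LSV_meas) (use b in auto)
  have B: "B \<in> sets mI" unfolding B_def using measurable_sets[OF L A(1)] .
  have "S = calT \<beta> k -` B \<inter> space mI"
  proof (rule set_eqI)
    fix x
    show "x \<in> S \<longleftrightarrow> x \<in> calT \<beta> k -` B \<inter> space mI"
    proof (cases "x \<in> space mI")
      case True
      have "calT \<beta> k x \<in> space mI" by (rule calT_range[where \<beta>=\<beta>]) (use b True in \<open>simp_all del: space_mI\<close>)
      then show ?thesis unfolding A(2) B_def by (simp del: space_mI)
    next
      case False then show ?thesis unfolding A(2) B_def by (simp del: space_mI)
    qed
  qed
  then show "S \<in> sets (Bn \<beta> k)" unfolding Bn_def using in_vimage_algebra[OF B] by simp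
qed

lemma Bn_mono: assumes b: "\<And>k. k \<ge> 1 \<Longrightarrow> 0 \<le> \<beta> k" and ij: "i \<le> j" shows "sets (Bn \<beta> j) \<subseteq> sets (Bn \<beta> i)"
proof -
  have "sets (Bn \<beta> (i + d)) \<subseteq> sets (Bn \<beta> i)" for d
  proof (induction d)
    case 0 then show ?case by simp
  next
    case (Suc d) then show ?case using Bn_step[where \<beta>=\<beta> and k="i+d", OF b] by simp
  qed
  from this[of "j - i"] ij show ?thesis by simp
qed

lemma abs4: "\<bar>((a::real)\<^sup>2)\<^sup>2\<bar> = \<bar>a\<bar> ^ 4"
proof -
  have "((a::real)\<^sup>2)\<^sup>2 = a ^ 4" by (simp flip: power_mult)
  then show ?thesis by (simp add: power_abs)
qed



theorem mainTheorem12: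
  fixes \<alpha> :: real and \<beta> :: "nat \<Rightarrow> real" and \<phi> :: "real \<Rightarrow> real"
    and c b :: real
  assumes "0 < \<alpha>" "\<alpha> < 1"
    and "\<And>k. k \<ge> 1 \<Longrightarrow> \<beta> k \<in> {0<..\<alpha>}"
    and "C1_on_unit \<phi>"
    and "\<exists>C. \<forall>j\<ge>1. (\<integral>\<^sup>+x. ennreal (\<bar>psi \<beta> \<phi> j (calT \<beta> j x)\<bar> ^ 4) \<partial>mI) \<le> ennreal C"
    and "\<exists>K. \<forall>\<^sub>F n in sequentially.
           \<bar>(\<integral>x. (\<Sum>k=1..n. phik \<beta> \<phi> k (calT \<beta> k x))\<^sup>2 \<partial>mI)
            - (\<integral>x. (\<Sum>j=1..n. (psi \<beta> \<phi> j (calT \<beta> j x))\<^sup>2) \<partial>mI)\<bar> \<le> K"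
    and "c > 0" "b > 1/2"
    and "\<forall>\<^sub>F n in sequentially.
           (\<integral>x. (\<Sum>k=1..n. phik \<beta> \<phi> k (calT \<beta> k x))\<^sup>2 \<partial>mI) \<ge> c * real n powr b"
  shows "conv_in_prob mI (\<lambda>n x.
           (1 / (\<integral>y. (\<Sum>k=1..n. phik \<beta> \<phi> k (calT \<beta> k y))\<^sup>2 \<partial>mI)) *
           (\<Sum>j=1..n. (psi \<beta> \<phi> j (calT \<beta> j x))\<^sup>2
              - real_cond_exp mI (Bn \<beta> (j + 1)) (\<lambda>y. (psi \<beta> \<phi> j (calT \<beta> j y))\<^sup>2) x))"
proof -
  have bb: "\<And>k. k \<ge> 1 \<Longrightarrow> 0 \<le> \<beta> k" using assms(3) by fastforce
  obtain C where C: "\<forall>j\<ge>1. (\<integral>\<^sup>+x. ennreal (\<bar>psi \<beta> \<phi> j (calT \<beta> j x)\<bar> ^ 4) \<partial>mI) \<le> ennreal C"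
    using assms(5) by blast
  define K where "K = max C 0"
  have K0: "0 \<le> K" by (simp add: K_def)
  have CK: "ennreal C \<le> ennreal K" by (simp add: K_def ennreal_leI)
  have psim: "(\<lambda>x. (psi \<beta> \<phi> j x)\<^sup>2) \<in> borel_measurable mI" for j
    using psi_meas[where \<beta>=\<beta> and \<phi>=\<phi> and n=j, OF bb assms(4)] by measurable
  have YmB: "(\<lambda>y. (psi \<beta> \<phi> j (calT \<beta> j y))\<^sup>2) \<in> borel_measurable (Bn \<beta> j)" for j
  proof -
    have "calT \<beta> j \<in> measurable (Bn \<beta> j) mI"
      unfolding Bn_def by (rule measurable_vimage_algebra1[OF calT_Pi[where \<beta>=\<beta>, OF bb]])
    from measurable_compose[OF this psim[of j]] show ?thesis .
  qed
  have YmM: "(\<lambda>y. (psi \<beta> \<phi> j (calT \<beta> j y))\<^sup>2) \<in> borel_measurable mI" for j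
    using measurable_compose[OF calT_meas[where \<beta>=\<beta>, OF bb] psim[of j]] .
  have Y4eq: "(\<integral>\<^sup>+x. ennreal (norm (((psi \<beta> \<phi> j (calT \<beta> j x))\<^sup>2)\<^sup>2)) \<partial>mI) =
      (\<integral>\<^sup>+x. ennreal (\<bar>psi \<beta> \<phi> j (calT \<beta> j x)\<bar> ^ 4) \<partial>mI)" for j
    by (rule nn_integral_cong) (simp only: real_norm_def abs4)
  have Y2: "integrable mI (\<lambda>x. ((psi \<beta> \<phi> j (calT \<beta> j x))\<^sup>2)\<^sup>2)" if j: "j \<ge> 1" for j
  proof (subst integrable_iff_bounded, intro conjI)
    show "(\<lambda>x. ((psi \<beta> \<phi> j (calT \<beta> j x))\<^sup>2)\<^sup>2) \<in> borel_measurable mI"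
      using YmM[of j] by measurable
    have "(\<integral>\<^sup>+x. ennreal (\<bar>psi \<beta> \<phi> j (calT \<beta> j x)\<bar> ^ 4) \<partial>mI) \<le> ennreal C" using C j by blast
    then show "(\<integral>\<^sup>+x. ennreal (norm (((psi \<beta> \<phi> j (calT \<beta> j x))\<^sup>2)\<^sup>2)) \<partial>mI) < \<infinity>"
      unfolding Y4eq by (simp add: le_less_trans)
  qed
  have Yb: "(\<integral>x. ((psi \<beta> \<phi> j (calT \<beta> j x))\<^sup>2)\<^sup>2 \<partial>mI) \<le> K" if j: "j \<ge> 1" for j
  proof -
    have m: "(\<lambda>x. ((psi \<beta> \<phi> j (calT \<beta> j x))\<^sup>2)\<^sup>2) \<in> borel_measurable mI"
      using YmM[of j] by measurable
    have "(\<integral>x. ((psi \<beta> \<phi> j (calT \<beta> j x))\<^sup>2)\<^sup>2 \<partial>mI) =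
        enn2real (\<integral>\<^sup>+x. ennreal (((psi \<beta> \<phi> j (calT \<beta> j x))\<^sup>2)\<^sup>2) \<partial>mI)"
      by (rule integral_eq_nn_integral[OF m]) simp
    also have "(\<integral>\<^sup>+x. ennreal (((psi \<beta> \<phi> j (calT \<beta> j x))\<^sup>2)\<^sup>2) \<partial>mI) =
        (\<integral>\<^sup>+x. ennreal (norm (((psi \<beta> \<phi> j (calT \<beta> j x))\<^sup>2)\<^sup>2)) \<partial>mI)"
      by (rule nn_integral_cong) simp
    also have "enn2real (\<integral>\<^sup>+x. ennreal (norm (((psi \<beta> \<phi> j (calT \<beta> j x))\<^sup>2)\<^sup>2)) \<partial>mI) \<le> K"
    proof (rule enn2real_leI[OF K0])
      have "(\<integral>\<^sup>+x. ennreal (\<bar>psi \<beta> \<phi> j (calT \<beta> j x)\<bar> ^ 4) \<partial>mI) \<le> ennreal C" using C j by blast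
      then show "(\<integral>\<^sup>+x. ennreal (norm (((psi \<beta> \<phi> j (calT \<beta> j x))\<^sup>2)\<^sup>2)) \<partial>mI) \<le> ennreal K"
        unfolding Y4eq using CK by (rule order_trans)
    qed
    finally show ?thesis .
  qed
  have R: "integrable mI (\<lambda>x. (\<Sum>j=1..n. (psi \<beta> \<phi> j (calT \<beta> j x))\<^sup>2
              - real_cond_exp mI (Bn \<beta> (j + 1)) (\<lambda>y. (psi \<beta> \<phi> j (calT \<beta> j y))\<^sup>2) x)\<^sup>2) \<and>
      (\<integral>x. (\<Sum>j=1..n. (psi \<beta> \<phi> j (calT \<beta> j x))\<^sup>2
              - real_cond_exp mI (Bn \<beta> (j + 1)) (\<lambda>y. (psi \<beta> \<phi> j (calT \<beta> j y))\<^sup>2) x)\<^sup>2 \<partial>mI)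
       \<le> 4 * K * real n" for n
    using rev_mart_sum[where Y="\<lambda>j y. (psi \<beta> \<phi> j (calT \<beta> j y))\<^sup>2" and F="Bn \<beta>" and K=K and n=n,
        OF Bn_sf[where \<beta>=\<beta>, OF bb] Bn_mono[where \<beta>=\<beta>, OF bb] YmB Y2 Yb] by simp
  define s where "s n = (\<integral>x. (\<Sum>k=1..n. phik \<beta> \<phi> k (calT \<beta> k x))\<^sup>2 \<partial>mI)" for n
  define S where "S n x = (\<Sum>j=1..n. (psi \<beta> \<phi> j (calT \<beta> j x))\<^sup>2
              - real_cond_exp mI (Bn \<beta> (j + 1)) (\<lambda>y. (psi \<beta> \<phi> j (calT \<beta> j y))\<^sup>2) x)" for n x
  have Sm: "S n \<in> borel_measurable mI" for n
    unfolding S_def[abs_def] using YmM by measurable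
  have SI: "integrable mI (\<lambda>x. (S n x)\<^sup>2)" "(\<integral>x. (S n x)\<^sup>2 \<partial>mI) \<le> 4 * K * real n" for n
    using R[of n] unfolding S_def by auto
  have sev: "\<forall>\<^sub>F n in sequentially. s n \<ge> c * real n powr b" using assms(9) unfolding s_def .
  show ?thesis unfolding conv_in_prob_def s_def[symmetric] S_def[symmetric]
  proof (intro allI impI)
    fix \<epsilon> :: real assume e: "0 < \<epsilon>"
    define A where "A = 4 * K / (c\<^sup>2 * \<epsilon>\<^sup>2)"
    have ev: "\<forall>\<^sub>F n in sequentially. measure mI {x \<in> space mI. \<epsilon> < \<bar>1 / s n * S n x\<bar>} \<le> A * real n powr (1 - 2*b)"
      using eventually_conj[OF sev eventually_ge_at_top[of 1]]
    proof eventually_elim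
      case (elim n)
      then have sn: "c * real n powr b \<le> s n" and n1: "1 \<le> n" by auto
      have np: "0 < real n" using n1 by simp
      have cp: "0 < c * real n powr b" using assms(7) np by simp
      have sp: "0 < s n" using cp sn by linarith
      have Zm: "(\<lambda>x. 1 / s n * S n x) \<in> borel_measurable mI" using Sm[of n] by measurable
      have Zsq: "(1 / s n * S n x)\<^sup>2 = (1 / s n)\<^sup>2 * (S n x)\<^sup>2" for x by (simp only: power_mult_distrib)
      have ZI: "integrable mI (\<lambda>x. (1 / s n * S n x)\<^sup>2)" unfolding Zsq using SI(1)[of n] by simp
      have set1: "{x \<in> space mI. \<epsilon> \<le> \<bar>1 / s n * S n x\<bar>} \<in> sets mI" using Zm by measurable
      have "measure mI {x \<in> space mI. \<epsilon> < \<bar>1 / s n * S n x\<bar>} \<le> measure mI {x \<in> space mI. \<epsilon> \<le> \<bar>1 / s n * S n x\<bar>}"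
        by (rule mIf.finite_measure_mono[OF _ set1]) auto
      also have "\<dots> \<le> (\<integral>x. (1 / s n * S n x)\<^sup>2 \<partial>mI) / \<epsilon>\<^sup>2"
        by (rule mIf.second_moment_method[OF Zm ZI e])
      also have "(\<integral>x. (1 / s n * S n x)\<^sup>2 \<partial>mI) = (1 / s n)\<^sup>2 * (\<integral>x. (S n x)\<^sup>2 \<partial>mI)"
        unfolding Zsq by simp
      also have "\<dots> \<le> (1 / s n)\<^sup>2 * (4 * K * real n)"
        by (rule mult_left_mono[OF SI(2)]) simp
      also have "\<dots> \<le> (1 / (c * real n powr b))\<^sup>2 * (4 * K * real n)"
      proof (rule mult_right_mono)
        have "1 / s n \<le> 1 / (c * real n powr b)" by (rule divide_left_mono[OF sn]) (use sp cp in auto)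
        moreover have "0 \<le> 1 / s n" using sp by simp
        ultimately show "(1 / s n)\<^sup>2 \<le> (1 / (c * real n powr b))\<^sup>2" by (rule power_mono)
        show "0 \<le> 4 * K * real n" using K0 by simp
      qed
      also have "(1 / (c * real n powr b))\<^sup>2 * (4 * K * real n) / \<epsilon>\<^sup>2 = A * real n powr (1 - 2*b)"
      proof -
        have "real n powr (1 - 2*b) = real n / (real n powr b)\<^sup>2"
          using np by (simp add: powr_diff power2_eq_square powr_add[symmetric] powr_one)
        then show ?thesis unfolding A_def using np e assms(7)
          by (simp add: field_simps power_mult_distrib)
      qed
      finally show ?case using e by (simp add: divide_right_mono)
    qed
    have lim: "(\<lambda>n. A * real n powr (1 - 2*b)) \<longlonglongrightarrow> 0"
    proof -
      have "(\<lambda>n. real n powr (1 - 2*b)) \<longlonglongrightarrow> 0"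
        by (rule tendsto_neg_powr) (use assms(8) filterlim_real_sequentially in auto)
      from tendsto_mult[OF tendsto_const this, of A] show ?thesis by simp
    qed
    show "(\<lambda>n. measure mI {x \<in> space mI. \<epsilon> < \<bar>1 / s n * S n x\<bar>}) \<longlonglongrightarrow> 0"
      by (rule tendsto_sandwich[OF _ ev tendsto_const lim]) simp
  qed
qed


end
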